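(* Let $p\ge2$, $n\ge1$, $\epsilon\in[0,1-1/p]$, $m\in\{j/p^n:0\le j\le p^n\}$, and let $\Phi:[0,1]\to\mathbb{R}$ be convex. Then there exists a monotone Boolean function $f:(\mathbb{Z}/p\mathbb{Z})^n\to\{0,1\}$ with $\mathbb{E} f=m$ such that $\mathbb{E}\Phi(T_\epsilon f)\ge\mathbb{E}\Phi(T_\epsilon g)$ for every Boolean function $g:(\mathbb{Z}/p\mathbb{Z})^n\to\{0,1\}$ with $\mathbb{E} g=m$.
   Context: $(\mathbb{Z}/p\mathbb{Z})^n$, with $\mathbb{Z}/p\mathbb{Z}=\{0,1,\dots,p-1\}$, carries the uniform measure. The noise operator is $T_\epsilon f(x)=\mathbb{E} f(x+Z)$, where $Z$ has independent coordinates, each equal to $0$ with probability $1-\epsilon$ and to each nonzero element with probability $\epsilon/(p-1)$. A function $f$ is monotone if $f(x)\le f(y)$ whenever $x_i\le y_i$ for all $i$, where $\{0,1,\dots,p-1\}$ is ordered as integers. *)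

theory Defs
  imports "HOL-Analysis.Analysis"
begin

text \<open>The cube (Z/pZ)^n: functions x on {0..<n} with values in {0..<p},
  extensional (undefined outside {0..<n}).\<close>
definition cube :: "nat \<Rightarrow> nat \<Rightarrow> (nat \<Rightarrow> nat) set" where
  "cube p n = PiE {0..<n} (\<lambda>_. {0..<p})"

definition addp :: "nat \<Rightarrow> nat \<Rightarrow> (nat \<Rightarrow> nat) \<Rightarrow> (nat \<Rightarrow> nat) \<Rightarrow> (nat \<Rightarrow> nat)" where
  "addp p n x z = restrict (\<lambda>i. (x i + z i) mod p) {0..<n}"

definition expect :: "nat \<Rightarrow> nat \<Rightarrow> ((nat \<Rightarrow> nat) \<Rightarrow> real) \<Rightarrow> real" where
  "expect p n f = (\<Sum>x\<in>cube p n. f x) / real (card (cube p n))"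

definition noise_wt :: "nat \<Rightarrow> real \<Rightarrow> nat \<Rightarrow> real" where
  "noise_wt p eps a = (if a = 0 then 1 - eps else eps / real (p - 1))"

definition noise_op :: "nat \<Rightarrow> nat \<Rightarrow> real \<Rightarrow> ((nat \<Rightarrow> nat) \<Rightarrow> real) \<Rightarrow> (nat \<Rightarrow> nat) \<Rightarrow> real" where
  "noise_op p n eps f x = (\<Sum>z\<in>cube p n. (\<Prod>i<n. noise_wt p eps (z i)) * f (addp p n x z))"

definition boolean_fun :: "nat \<Rightarrow> nat \<Rightarrow> ((nat \<Rightarrow> nat) \<Rightarrow> real) \<Rightarrow> bool" where
  "boolean_fun p n f \<longleftrightarrow> (\<forall>x\<in>cube p n. f x \<in> {0, 1})"

definition monotone_fun :: "nat \<Rightarrow> nat \<Rightarrow> ((nat \<Rightarrow> nat) \<Rightarrow> real) \<Rightarrow> bool" where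
  "monotone_fun p n f \<longleftrightarrow>
     (\<forall>x\<in>cube p n. \<forall>y\<in>cube p n. (\<forall>i<n. x i \<le> y i) \<longrightarrow> f x \<le> f y)"

end

theory Submission imports Defs begin

lemma modcancel0: "(a + z) mod p = (a + z') mod (p::nat) \<Longrightarrow> a < p \<Longrightarrow> z < p \<Longrightarrow> z' < p \<Longrightarrow> z = z'"
  by (subst (asm) (1 2) mod_if) (auto split: if_splits)

lemma modcancel: assumes "(a + z) mod p = (a + z') mod (p::nat)" "z < p" "z' < p" shows "z = z'"
proof -
  have "(a mod p + z) mod p = (a mod p + z') mod p" using assms(1) by (metis mod_add_left_eq)
  moreover have "a mod p < p" using assms(2) by simp
  ultimately show ?thesis using modcancel0 assms(2,3) by blast
qed

lemma mod_zero_iff: "z < (p::nat) \<Longrightarrow> a < p \<Longrightarrow> ((a + z) mod p = a) = (z = 0)"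
  using modcancel0[of a z p 0] by auto

definition k1 :: "nat \<Rightarrow> real \<Rightarrow> nat \<Rightarrow> nat \<Rightarrow> real" where
  "k1 p eps a b = (if a = b then 1 - eps else eps / real (p - 1))"

definition Kk :: "nat \<Rightarrow> nat \<Rightarrow> real \<Rightarrow> (nat \<Rightarrow> nat) \<Rightarrow> (nat \<Rightarrow> nat) \<Rightarrow> real" where
  "Kk p n eps x y = (\<Prod>k<n. k1 p eps (x k) (y k))"

lemma cube_iff: "x \<in> cube p n \<longleftrightarrow> (\<forall>k<n. x k < p) \<and> (\<forall>k. k \<ge> n \<longrightarrow> x k = undefined)"
  unfolding cube_def PiE_def extensional_def by auto

lemma finite_cube: "finite (cube p n)"
  unfolding cube_def by (intro finite_PiE) auto

lemma card_cube: "card (cube p n) = p ^ n"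
  unfolding cube_def by (simp add: card_PiE)

lemma cube_upd: "x \<in> cube p n \<Longrightarrow> i < n \<Longrightarrow> t < p \<Longrightarrow> x(i := t) \<in> cube p n"
  unfolding cube_iff by auto

lemma addp_cube: "0 < p \<Longrightarrow> addp p n x z \<in> cube p n"
  unfolding cube_iff addp_def by auto

lemma addp_inj: "0 < p \<Longrightarrow> inj_on (addp p n x) (cube p n)"
proof (rule inj_onI)
  fix z z' assume z: "z \<in> cube p n" and z': "z' \<in> cube p n" and eq: "addp p n x z = addp p n x z'"
  show "z = z'"
  proof (rule ext)
    fix k show "z k = z' k"
    proof (cases "k < n")
      case True
      have "(x k + z k) mod p = (x k + z' k) mod p"
        using fun_cong[OF eq, of k] True by (simp add: addp_def)
      then show ?thesis using modcancel[of "x k" "z k" p "z' k"] z z' True unfolding cube_iff by blast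
    next
      case False then show ?thesis using z z' unfolding cube_iff by auto
    qed
  qed
qed

lemma addp_image: "0 < p \<Longrightarrow> addp p n x ` cube p n = cube p n"
proof -
  assume p: "0 < p"
  have "addp p n x ` cube p n \<subseteq> cube p n" using addp_cube[OF p] by auto
  moreover have "card (addp p n x ` cube p n) = card (cube p n)"
    using card_image[OF addp_inj[OF p]] .
  ultimately show ?thesis using finite_cube card_subset_eq by metis
qed

lemma noise_eq:
  assumes p: "0 < p" and x: "x \<in> cube p n"
  shows "noise_op p n eps f x = (\<Sum>y\<in>cube p n. Kk p n eps x y * f y)"
proof -
  have "noise_op p n eps f x = (\<Sum>z\<in>cube p n. Kk p n eps x (addp p n x z) * f (addp p n x z))"
    unfolding noise_op_def
  proof (intro sum.cong refl)
    fix z assume z: "z \<in> cube p n"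
    have "(\<Prod>i<n. noise_wt p eps (z i)) = Kk p n eps x (addp p n x z)"
      unfolding Kk_def
    proof (intro prod.cong refl)
      fix i assume i: "i \<in> {..<n}"
      then have "z i < p" "x i < p" using x z unfolding cube_iff by auto
      then show "noise_wt p eps (z i) = k1 p eps (x i) (addp p n x z i)"
        using i mod_zero_iff[of "z i" p "x i"]
        unfolding noise_wt_def k1_def addp_def by auto
    qed
    then show "(\<Prod>i<n. noise_wt p eps (z i)) * f (addp p n x z) =
      Kk p n eps x (addp p n x z) * f (addp p n x z)" by simp
  qed
  also have "\<dots> = (\<Sum>y\<in>addp p n x ` cube p n. Kk p n eps x y * f y)"
    by (rule sum.reindex[OF addp_inj[OF p], symmetric, unfolded comp_def])
  also have "\<dots> = (\<Sum>y\<in>cube p n. Kk p n eps x y * f y)"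
    using addp_image[OF p] by simp
  finally show ?thesis .
qed


locale noise_ctx =
  fixes p n :: nat and eps :: real
  assumes p2: "p \<ge> 2" and e0: "0 \<le> eps" and e1: "eps \<le> 1 - 1 / real p"
begin

definition "del = eps / real (p - 1)"

lemma del_ge0: "0 \<le> del" using e0 p2 by (simp add: del_def)

lemma del_le: "del \<le> 1 - eps"
proof -
  have pp: "real (p - 1) > 0" using p2 by simp
  have "eps * real p \<le> real p - 1" using e1 p2 by (simp add: field_simps)
  then have "eps \<le> (1 - eps) * real (p - 1)" using p2 by (simp add: of_nat_diff algebra_simps)
  then show ?thesis unfolding del_def using pp by (simp add: divide_le_eq)
qed

lemma one_m_e: "0 \<le> 1 - eps" using del_ge0 del_le by linarith

lemma k1_ge0: "0 \<le> k1 p eps a b" using del_ge0 one_m_e unfolding k1_def del_def by auto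

lemma Kk_ge0: "0 \<le> Kk p n eps x y" unfolding Kk_def by (intro prod_nonneg) (auto intro: k1_ge0)

lemma k1_sum: assumes a: "a < p" shows "(\<Sum>b\<in>{0..<p}. k1 p eps a b) = 1"
proof -
  have "(\<Sum>b\<in>{0..<p}. k1 p eps a b) = k1 p eps a a + (\<Sum>b\<in>{0..<p} - {a}. k1 p eps a b)"
    using a by (subst sum.remove[of _ a]) auto
  also have "(\<Sum>b\<in>{0..<p} - {a}. k1 p eps a b) = (\<Sum>b\<in>{0..<p} - {a}. del)"
    by (intro sum.cong) (auto simp: k1_def del_def)
  also have "\<dots> = real (p - 1) * del" using a by simp
  also have "\<dots> = eps" using p2 unfolding del_def by simp
  finally show ?thesis by (simp add: k1_def)
qed

lemma Kk_sum: assumes x: "x \<in> cube p n" shows "(\<Sum>y\<in>cube p n. Kk p n eps x y) = 1"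
proof -
  have "(\<Sum>y\<in>cube p n. Kk p n eps x y) = (\<Prod>k<n. \<Sum>b\<in>{0..<p}. k1 p eps (x k) b)"
    unfolding Kk_def cube_def atLeast0LessThan by (subst prod_sum_PiE) auto
  also have "\<dots> = 1" using x by (intro prod.neutral) (auto simp: cube_iff k1_sum)
  finally show ?thesis .
qed

lemma T_range:
  assumes x: "x \<in> cube p n" and f: "\<And>y. y \<in> cube p n \<Longrightarrow> 0 \<le> f y \<and> f y \<le> 1"
  shows "0 \<le> (\<Sum>y\<in>cube p n. Kk p n eps x y * f y)" "(\<Sum>y\<in>cube p n. Kk p n eps x y * f y) \<le> 1"
proof -
  show "0 \<le> (\<Sum>y\<in>cube p n. Kk p n eps x y * f y)"
    using f Kk_ge0 by (intro sum_nonneg) auto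
  have "(\<Sum>y\<in>cube p n. Kk p n eps x y * f y) \<le> (\<Sum>y\<in>cube p n. Kk p n eps x y)"
    using f Kk_ge0 by (intro sum_mono) (simp add: mult_left_le)
  then show "(\<Sum>y\<in>cube p n. Kk p n eps x y * f y) \<le> 1" using Kk_sum[OF x] by simp
qed

end

lemma decomp:
  assumes i: "i < n" and s: "s < p" and t: "t < p" and st: "s \<noteq> t"
  shows "(\<Sum>y\<in>cube p n. h y) = (\<Sum>y\<in>{y\<in>cube p n. y i = s}. h y + h (y(i:=t)))
     + (\<Sum>y\<in>{y\<in>cube p n. y i \<noteq> s \<and> y i \<noteq> t}. h y)"
proof -
  let ?S = "{y\<in>cube p n. y i = s}" and ?T = "{y\<in>cube p n. y i = t}"
    and ?R = "{y\<in>cube p n. y i \<noteq> s \<and> y i \<noteq> t}"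
  have fin: "finite ?S" "finite ?T" "finite ?R" using finite_cube by auto
  have cu: "cube p n = (?S \<union> ?T) \<union> ?R" by auto
  have bij: "bij_betw (\<lambda>y. y(i:=t)) ?S ?T"
    by (rule bij_betw_byWitness[where f'="\<lambda>y. y(i:=s)"])
       (auto intro!: cube_upd simp: i s t)
  have "(\<Sum>y\<in>?T. h y) = (\<Sum>y\<in>?S. h (y(i:=t)))"
    using sum.reindex_bij_betw[OF bij, of h] by simp
  then have "(\<Sum>y\<in>cube p n. h y) = ((\<Sum>y\<in>?S. h y) + (\<Sum>y\<in>?S. h (y(i:=t)))) + (\<Sum>y\<in>?R. h y)"
    using st by (subst cu, subst sum.union_disjoint, (use fin in auto)[3],
        subst sum.union_disjoint, (use fin in auto)[3]) simp
  then show ?thesis by (simp add: sum.distrib)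
qed


lemma minmax_ineq:
  fixes \<alpha> \<beta> a b :: real
  assumes "0 \<le> \<beta>" "\<beta> \<le> \<alpha>"
  shows "\<alpha> * min a b + \<beta> * max a b \<le> \<alpha> * a + \<beta> * b"
    "\<alpha> * min a b + \<beta> * max a b \<le> \<beta> * a + \<alpha> * b"
proof -
  have h: "(\<alpha> - \<beta>) * c \<le> 0" if "c \<le> 0" for c
    using assms that by (intro mult_nonneg_nonpos) auto
  show "\<alpha> * min a b + \<beta> * max a b \<le> \<alpha> * a + \<beta> * b"
    using h[of "b - a"] by (cases "a \<le> b") (auto simp: algebra_simps)
  show "\<alpha> * min a b + \<beta> * max a b \<le> \<beta> * a + \<alpha> * b"
    using h[of "a - b"] by (cases "a \<le> b") (auto simp: algebra_simps)
qed

lemma convex_pair: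
  fixes \<Phi> :: "real \<Rightarrow> real"
  assumes cv: "convex_on {0..1} \<Phi>"
    and r: "a \<in> {0..1}" "b \<in> {0..1}" "a' \<in> {0..1}" "b' \<in> {0..1}"
    and le: "a' \<le> a" "a' \<le> b" and sm: "a' + b' = a + b"
  shows "\<Phi> a + \<Phi> b \<le> \<Phi> a' + \<Phi> b'"
proof (cases "a' = b'")
  case True
  then have "a = a'" "b = a'" using le sm by auto
  then show ?thesis using True by simp
next
  case False
  then have lt: "a' < b'" using le sm by auto
  define l where "l = (a - a') / (b' - a')"
  have l0: "0 \<le> l" "l \<le> 1" using lt le sm unfolding l_def by (auto simp: divide_simps)
  have lm: "l * (b' - a') = a - a'" using lt unfolding l_def by simp
  have ea: "a = (1 - l) *\<^sub>R a' + l *\<^sub>R b'" using lm by (simp add: algebra_simps)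
  have eb: "b = (1 - (1 - l)) *\<^sub>R a' + (1 - l) *\<^sub>R b'" using lm sm by (simp add: algebra_simps)
  have "\<Phi> a \<le> (1 - l) * \<Phi> a' + l * \<Phi> b'"
    using convex_onD[OF cv, of l a' b'] l0 r ea by simp
  moreover have "\<Phi> b \<le> (1 - (1 - l)) * \<Phi> a' + (1 - l) * \<Phi> b'"
    using convex_onD[OF cv, of "1 - l" a' b'] l0 r eb by simp
  ultimately show ?thesis by (simp add: algebra_simps)
qed

definition Tn :: "nat \<Rightarrow> nat \<Rightarrow> real \<Rightarrow> ((nat \<Rightarrow> nat) \<Rightarrow> real) \<Rightarrow> (nat \<Rightarrow> nat) \<Rightarrow> real" where
  "Tn p n eps f x = (\<Sum>y\<in>cube p n. Kk p n eps x y * f y)"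

definition comp :: "nat \<Rightarrow> nat \<Rightarrow> nat \<Rightarrow> ((nat \<Rightarrow> nat) \<Rightarrow> real) \<Rightarrow> (nat \<Rightarrow> nat) \<Rightarrow> real" where
  "comp i s t f y = (if y i = s then min (f y) (f (y(i:=t)))
     else if y i = t then max (f y) (f (y(i:=s))) else f y)"

definition wt :: "nat \<Rightarrow> (nat \<Rightarrow> nat) \<Rightarrow> real" where
  "wt n y = (\<Sum>k<n. real (y k))"

definition Wf :: "nat \<Rightarrow> nat \<Rightarrow> ((nat \<Rightarrow> nat) \<Rightarrow> real) \<Rightarrow> real" where
  "Wf p n f = (\<Sum>y\<in>cube p n. f y * wt n y)"

lemma wt_upd: "i < n \<Longrightarrow> wt n (y(i:=t)) = wt n y - real (y i) + real t"
proof -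
  assume i: "i < n"
  have "wt n (y(i:=t)) = real t + (\<Sum>k\<in>{..<n} - {i}. real ((y(i:=t)) k))"
    unfolding wt_def using i by (subst sum.remove[of _ i]) auto
  also have "(\<Sum>k\<in>{..<n} - {i}. real ((y(i:=t)) k)) = (\<Sum>k\<in>{..<n} - {i}. real (y k))"
    by (intro sum.cong) auto
  also have "\<dots> = wt n y - real (y i)"
    unfolding wt_def using i by (subst sum.remove[of _ i]) auto
  finally show ?thesis by linarith
qed

locale comp_ctx = noise_ctx +
  fixes i s t :: nat
  assumes i: "i < n" and st: "s < t" and t: "t < p"
begin

lemma s: "s < p" using st t by simp
lemma snt: "s \<noteq> t" using st by simp

definition "Q a b = (\<Prod>k\<in>{..<n} - {i}. k1 p eps (a k) (b k))"

lemma Kk_split: "Kk p n eps a b = k1 p eps (a i) (b i) * Q a b"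
  unfolding Kk_def Q_def using i by (subst prod.remove[of _ i]) auto

lemma Q_upd: "Q (a(i:=u)) b = Q a b" "Q a (b(i:=u)) = Q a b"
  unfolding Q_def by (intro prod.cong; auto)+

lemma Q_ge0: "0 \<le> Q a b" unfolding Q_def by (intro prod_nonneg) (auto intro: k1_ge0)

lemma K1: "x i = s \<Longrightarrow> y i = s \<Longrightarrow> Kk p n eps (x(i:=t)) (y(i:=t)) = Kk p n eps x y"
  by (simp add: Kk_split Q_upd k1_def)
lemma K2: "x i = s \<Longrightarrow> y i = s \<Longrightarrow> Kk p n eps (x(i:=t)) y = Kk p n eps x (y(i:=t))"
  using snt by (simp add: Kk_split Q_upd k1_def)
lemma K3: "x i = s \<Longrightarrow> y i = s \<Longrightarrow> Kk p n eps x (y(i:=t)) \<le> Kk p n eps x y"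
proof -
  assume a: "x i = s" "y i = s"
  have "del * Q x y \<le> (1 - eps) * Q x y" using del_le Q_ge0[of x y] by (rule mult_right_mono)
  then show ?thesis using a snt by (simp add: Kk_split Q_upd k1_def del_def)
qed
lemma K4: "x i = s \<Longrightarrow> y i \<noteq> s \<Longrightarrow> y i \<noteq> t \<Longrightarrow> Kk p n eps (x(i:=t)) y = Kk p n eps x y"
  using snt by (simp add: Kk_split Q_upd k1_def)
lemma K5: "x i \<noteq> s \<Longrightarrow> x i \<noteq> t \<Longrightarrow> y i = s \<Longrightarrow> Kk p n eps x (y(i:=t)) = Kk p n eps x y"
  using snt by (simp add: Kk_split Q_upd k1_def)

lemma comp_S: "y i = s \<Longrightarrow> comp i s t f y = min (f y) (f (y(i:=t)))"
  by (simp add: comp_def)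
lemma comp_T: "y i = s \<Longrightarrow> comp i s t f (y(i:=t)) = max (f (y(i:=t))) (f y)"
proof -
  assume a: "y i = s"
  have "(y(i:=t))(i:=s) = y" using a by auto
  then show ?thesis using a snt by (simp add: comp_def)
qed
lemma comp_R: "y i \<noteq> s \<Longrightarrow> y i \<noteq> t \<Longrightarrow> comp i s t f y = f y"
  by (simp add: comp_def)

lemmas dec = decomp[OF i s t snt]

end


context comp_ctx begin

lemma T_dec: "Tn p n eps f x = (\<Sum>y\<in>{y\<in>cube p n. y i = s}. Kk p n eps x y * f y + Kk p n eps x (y(i:=t)) * f (y(i:=t)))
   + (\<Sum>y\<in>{y\<in>cube p n. y i \<noteq> s \<and> y i \<noteq> t}. Kk p n eps x y * f y)"
  unfolding Tn_def by (rule dec)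

lemma comp_in: "y \<in> cube p n \<Longrightarrow> comp i s t f y \<in> {f y, f (y(i:=t)), f (y(i:=s))}"
  unfolding comp_def min_def max_def by auto

lemma comp_P: assumes "\<And>y. y \<in> cube p n \<Longrightarrow> P (f y)" "y \<in> cube p n"
  shows "P (comp i s t f y)"
  using comp_in[OF assms(2), of f] assms cube_upd[OF assms(2) i t] cube_upd[OF assms(2) i s] by auto

lemma pair:
  fixes f :: "(nat \<Rightarrow> nat) \<Rightarrow> real"
  assumes x: "x i = s"
  defines "g \<equiv> comp i s t f"
  shows "Tn p n eps g x + Tn p n eps g (x(i:=t)) = Tn p n eps f x + Tn p n eps f (x(i:=t))"
    "Tn p n eps g x \<le> Tn p n eps f x" "Tn p n eps g x \<le> Tn p n eps f (x(i:=t))"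
proof -
  let ?S = "{y\<in>cube p n. y i = s}" and ?R = "{y\<in>cube p n. y i \<noteq> s \<and> y i \<noteq> t}"
  let ?a = "\<lambda>y. Kk p n eps x y" and ?b = "\<lambda>y. Kk p n eps x (y(i:=t))"
  let ?m = "\<lambda>y. min (f y) (f (y(i:=t)))" and ?M = "\<lambda>y. max (f y) (f (y(i:=t)))"
  let ?r = "\<Sum>y\<in>?R. Kk p n eps x y * f y"
  have rg: "(\<Sum>y\<in>?R. Kk p n eps z y * g y) = (\<Sum>y\<in>?R. Kk p n eps z y * f y)" for z
    by (intro sum.cong) (auto simp: g_def comp_R)
  have rt: "(\<Sum>y\<in>?R. Kk p n eps (x(i:=t)) y * f y) = ?r"
    by (intro sum.cong) (auto simp: K4 x)
  have hgx: "Tn p n eps g x = (\<Sum>y\<in>?S. ?a y * ?m y + ?b y * ?M y) + ?r"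
    unfolding T_dec rg by (intro arg_cong2[where f="(+)"] sum.cong refl)
      (auto simp: g_def comp_S comp_T max.commute)
  have hgxt: "Tn p n eps g (x(i:=t)) = (\<Sum>y\<in>?S. ?b y * ?m y + ?a y * ?M y) + ?r"
    unfolding T_dec rg rt by (intro arg_cong2[where f="(+)"] sum.cong refl)
      (auto simp: g_def comp_S comp_T max.commute K1 K2 x)
  have hfx: "Tn p n eps f x = (\<Sum>y\<in>?S. ?a y * f y + ?b y * f (y(i:=t))) + ?r"
    unfolding T_dec by simp
  have hfxt: "Tn p n eps f (x(i:=t)) = (\<Sum>y\<in>?S. ?b y * f y + ?a y * f (y(i:=t))) + ?r"
    unfolding T_dec rt by (intro arg_cong2[where f="(+)"] sum.cong refl) (auto simp: K1 K2 x)
  have ab: "0 \<le> ?b y" "?b y \<le> ?a y" if "y \<in> ?S" for y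
    using that K3[where x=x] x Kk_ge0 by auto
  have "(\<Sum>y\<in>?S. ?a y * ?m y + ?b y * ?M y) + (\<Sum>y\<in>?S. ?b y * ?m y + ?a y * ?M y)
      = (\<Sum>y\<in>?S. ?a y * f y + ?b y * f (y(i:=t))) + (\<Sum>y\<in>?S. ?b y * f y + ?a y * f (y(i:=t)))"
    unfolding sum.distrib[symmetric]
    by (intro sum.cong refl) (auto simp: min_def max_def algebra_simps)
  then show "Tn p n eps g x + Tn p n eps g (x(i:=t)) = Tn p n eps f x + Tn p n eps f (x(i:=t))"
    unfolding hgx hgxt hfx hfxt by simp
  have "(\<Sum>y\<in>?S. ?a y * ?m y + ?b y * ?M y) \<le> (\<Sum>y\<in>?S. ?a y * f y + ?b y * f (y(i:=t)))"
    by (intro sum_mono minmax_ineq(1) ab)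
  then show "Tn p n eps g x \<le> Tn p n eps f x" unfolding hgx hfx by simp
  have "(\<Sum>y\<in>?S. ?a y * ?m y + ?b y * ?M y) \<le> (\<Sum>y\<in>?S. ?b y * f y + ?a y * f (y(i:=t)))"
    by (intro sum_mono minmax_ineq(2) ab)
  then show "Tn p n eps g x \<le> Tn p n eps f (x(i:=t))" unfolding hgx hfxt by simp
qed

lemma pair_sum: "y i = s \<Longrightarrow> comp i s t f y + comp i s t f (y(i:=t)) = f y + f (y(i:=t))"
  by (simp add: comp_S comp_T min_def max_def)

lemma mean_eq: "(\<Sum>y\<in>cube p n. comp i s t f y) = (\<Sum>y\<in>cube p n. f y)"
  unfolding dec[of "comp i s t f"] dec[of f]
proof (rule arg_cong2[where f="(+)"]; rule sum.cong[OF refl])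
  fix y assume "y \<in> {y \<in> cube p n. y i = s}"
  then show "comp i s t f y + comp i s t f (y(i:=t)) = f y + f (y(i:=t))" by (intro pair_sum) simp
next
  fix y assume "y \<in> {y \<in> cube p n. y i \<noteq> s \<and> y i \<noteq> t}"
  then show "comp i s t f y = f y" by (intro comp_R) auto
qed

lemma Rpt:
  assumes x: "x i \<noteq> s" "x i \<noteq> t"
  shows "Tn p n eps (comp i s t f) x = Tn p n eps f x"
  unfolding T_dec
proof (rule arg_cong2[where f="(+)"]; rule sum.cong[OF refl])
  fix y assume y: "y \<in> {y\<in>cube p n. y i = s}"
  then show "Kk p n eps x y * comp i s t f y + Kk p n eps x (y(i:=t)) * comp i s t f (y(i:=t)) =
      Kk p n eps x y * f y + Kk p n eps x (y(i:=t)) * f (y(i:=t))"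
  proof -
    have ys: "y i = s" using y by simp
    have e: "Kk p n eps x (y(i:=t)) = Kk p n eps x y" using K5[where x=x and y=y, OF x ys] .
    have "Kk p n eps x y * comp i s t f y + Kk p n eps x y * comp i s t f (y(i:=t)) =
      Kk p n eps x y * (comp i s t f y + comp i s t f (y(i:=t)))" by (simp add: algebra_simps)
    also have "\<dots> = Kk p n eps x y * (f y + f (y(i:=t)))" using pair_sum[where y=y and f=f, OF ys] by simp
    finally show ?thesis unfolding e by (simp add: algebra_simps)
  qed
next
  fix y assume y: "y \<in> {y\<in>cube p n. y i \<noteq> s \<and> y i \<noteq> t}"
  then show "Kk p n eps x y * comp i s t f y = Kk p n eps x y * f y" by (simp add: comp_R)
qed

lemma Tn_range: "x \<in> cube p n \<Longrightarrow> (\<And>y. y \<in> cube p n \<Longrightarrow> f y \<in> {0..1}) \<Longrightarrow> Tn p n eps f x \<in> {0..1}"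
  using T_range[of x f] unfolding Tn_def by auto

lemma J_mono:
  assumes cv: "convex_on {0..1} \<Phi>" and f: "\<And>y. y \<in> cube p n \<Longrightarrow> f y \<in> {0..1}"
  shows "(\<Sum>x\<in>cube p n. \<Phi> (Tn p n eps f x)) \<le> (\<Sum>x\<in>cube p n. \<Phi> (Tn p n eps (comp i s t f) x))"
proof -
  have g: "comp i s t f y \<in> {0..1}" if "y \<in> cube p n" for y
    using comp_P[where f=f and P="\<lambda>v. v \<in> {0..1}", OF f that] by simp
  show ?thesis
    unfolding dec[of "\<lambda>x. \<Phi> (Tn p n eps f x)"] dec[of "\<lambda>x. \<Phi> (Tn p n eps (comp i s t f) x)"]
  proof (rule add_mono; rule sum_mono)
    fix x assume x: "x \<in> {y\<in>cube p n. y i = s}"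
    then have xc: "x \<in> cube p n" "x(i:=t) \<in> cube p n" using cube_upd[OF _ i t] by auto
    show "\<Phi> (Tn p n eps f x) + \<Phi> (Tn p n eps f (x(i:=t))) \<le>
      \<Phi> (Tn p n eps (comp i s t f) x) + \<Phi> (Tn p n eps (comp i s t f) (x(i:=t)))"
      by (rule convex_pair[OF cv Tn_range Tn_range Tn_range Tn_range pair(2,3) _])
        (use x xc f g pair(1)[of x f] in auto)
  next
    fix x assume "x \<in> {y\<in>cube p n. y i \<noteq> s \<and> y i \<noteq> t}"
    then show "\<Phi> (Tn p n eps f x) \<le> \<Phi> (Tn p n eps (comp i s t f) x)" by (simp add: Rpt)
  qed
qed

lemma W_less:
  assumes u: "u \<in> cube p n" "u i = s" "f u = 1" "f (u(i:=t)) = 0"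
    and fb: "\<And>y. y \<in> cube p n \<Longrightarrow> f y \<in> {0,1}"
  shows "Wf p n f < Wf p n (comp i s t f)"
proof -
  have w: "wt n (y(i:=t)) = wt n y + (real t - real s)" if "y i = s" for y
    using wt_upd[OF i, of y t] that by simp
  have ts: "real s < real t" using st by simp
  show ?thesis
    unfolding Wf_def dec[of "\<lambda>y. f y * wt n y"] dec[of "\<lambda>y. comp i s t f y * wt n y"]
  proof (rule add_less_le_mono, rule sum_strict_mono_ex1)
    show "finite {y \<in> cube p n. y i = s}" using finite_cube by simp
    show "\<forall>y\<in>{y \<in> cube p n. y i = s}. f y * wt n y + f (y(i:=t)) * wt n (y(i:=t))
       \<le> comp i s t f y * wt n y + comp i s t f (y(i:=t)) * wt n (y(i:=t))"
    proof
      fix y assume y: "y \<in> {y \<in> cube p n. y i = s}"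
      have "f y \<in> {0,1}" "f (y(i:=t)) \<in> {0,1}" using fb y cube_upd[OF _ i t] by auto
      then show "f y * wt n y + f (y(i:=t)) * wt n (y(i:=t))
       \<le> comp i s t f y * wt n y + comp i s t f (y(i:=t)) * wt n (y(i:=t))"
        using y w[of y] ts by (auto simp: comp_S comp_T algebra_simps)
    qed
    show "\<exists>y\<in>{y \<in> cube p n. y i = s}. f y * wt n y + f (y(i:=t)) * wt n (y(i:=t))
       < comp i s t f y * wt n y + comp i s t f (y(i:=t)) * wt n (y(i:=t))"
      using u w[of u] ts by (intro bexI[of _ u]) (auto simp: comp_S comp_T algebra_simps)
  next
    show "(\<Sum>y\<in>{y \<in> cube p n. y i \<noteq> s \<and> y i \<noteq> t}. f y * wt n y)
      \<le> (\<Sum>y\<in>{y \<in> cube p n. y i \<noteq> s \<and> y i \<noteq> t}. comp i s t f y * wt n y)"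
      by (intro sum_mono) (simp add: comp_R)
  qed
qed

end


lemma viol_aux:
  "\<forall>x y. x \<in> cube p n \<and> y \<in> cube p n \<and> (\<forall>i<n. x i \<le> y i) \<and> x \<in> A \<and> y \<notin> A
     \<and> card {i\<in>{..<n}. x i \<noteq> y i} = k \<longrightarrow>
     (\<exists>u i t. u \<in> cube p n \<and> i < n \<and> u i < t \<and> t < p \<and> u \<in> A \<and> u(i:=t) \<notin> A)"
proof (induction k)
  case 0
  show ?case
  proof (intro allI impI, elim conjE)
    fix x y assume x: "x \<in> cube p n" and y: "y \<in> cube p n" and xA: "x \<in> A" and yA: "y \<notin> A"
      and c: "card {i\<in>{..<n}. x i \<noteq> y i} = 0"
    have "{i\<in>{..<n}. x i \<noteq> y i} = {}" using c by simp
    then have "x = y" using x y unfolding cube_def by (intro PiE_ext[of x _ "\<lambda>_. {0..<p}"]) auto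
    then show "\<exists>u i t. u \<in> cube p n \<and> i < n \<and> u i < t \<and> t < p \<and> u \<in> A \<and> u(i:=t) \<notin> A"
      using xA yA by simp
  qed
next
  case (Suc k)
  show ?case
  proof (intro allI impI, elim conjE)
    fix x y assume x: "x \<in> cube p n" and y: "y \<in> cube p n" and le: "\<forall>i<n. x i \<le> y i"
      and xA: "x \<in> A" and yA: "y \<notin> A"
      and c: "card {i\<in>{..<n}. x i \<noteq> y i} = Suc k"
    then obtain i where i: "i \<in> {i\<in>{..<n}. x i \<noteq> y i}"
      by (metis (no_types, lifting) card.empty ex_in_conv nat.distinct(1))
    then have iN: "i < n" and xy: "x i < y i" using le by (auto simp: le_neq_implies_less)
    have yp: "y i < p" using y iN unfolding cube_iff by auto
    define z where "z = x(i := y i)"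
    have z: "z \<in> cube p n" unfolding z_def using cube_upd[OF x iN yp] .
    show "\<exists>u i t. u \<in> cube p n \<and> i < n \<and> u i < t \<and> t < p \<and> u \<in> A \<and> u(i:=t) \<notin> A"
    proof (cases "z \<in> A")
      case False
      then show ?thesis using x iN xy yp xA unfolding z_def by blast
    next
      case True
      have D: "{j\<in>{..<n}. z j \<noteq> y j} = {j\<in>{..<n}. x j \<noteq> y j} - {i}"
        unfolding z_def by auto
      have "card {j\<in>{..<n}. z j \<noteq> y j} = k" unfolding D using c i by (simp add: card_Diff_singleton)
      moreover have "\<forall>j<n. z j \<le> y j" using le unfolding z_def by auto
      ultimately show ?thesis using Suc.IH z y True yA by blast
    qed
  qed
qed

lemma viol:
  assumes "\<not> monotone_fun p n (indicator A)"
  shows "\<exists>u i t. u \<in> cube p n \<and> i < n \<and> u i < t \<and> t < p \<and> u \<in> A \<and> u(i:=t) \<notin> A"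
proof -
  obtain x y where x: "x \<in> cube p n" and y: "y \<in> cube p n" and le: "\<forall>i<n. x i \<le> y i"
    and lt: "\<not> (indicator A x :: real) \<le> indicator A y"
    using assms unfolding monotone_fun_def by blast
  have "x \<in> A" "y \<notin> A" using lt by (auto simp: indicator_def split: if_splits)
  then show ?thesis using viol_aux[where p=p and n=n and A=A and k="card {i\<in>{..<n}. x i \<noteq> y i}"] x y le by blast
qed

lemma J_eq: "0 < p \<Longrightarrow> expect p n (\<lambda>x. \<Phi> (noise_op p n eps f x))
   = (\<Sum>x\<in>cube p n. \<Phi> (Tn p n eps f x)) / real (card (cube p n))"
  unfolding expect_def by (intro arg_cong2[where f="(/)"] sum.cong refl) (simp add: noise_eq Tn_def)

lemma J_cong: assumes "0 < p" "\<And>y. y \<in> cube p n \<Longrightarrow> f y = g y"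
  shows "expect p n (\<lambda>x. \<Phi> (noise_op p n eps f x)) = expect p n (\<lambda>x. \<Phi> (noise_op p n eps g x))"
  unfolding J_eq[OF assms(1)] Tn_def using assms(2) by simp

lemma E_cong: assumes "\<And>y. y \<in> cube p n \<Longrightarrow> f y = g y"
  shows "expect p n f = expect p n g"
  unfolding expect_def using assms by simp

lemma W_cong: assumes "\<And>y. y \<in> cube p n \<Longrightarrow> f y = g y"
  shows "Wf p n f = Wf p n g"
  unfolding Wf_def using assms by simp

lemma exp_indicator: assumes "A \<subseteq> cube p n"
  shows "expect p n (indicator A) = real (card A) / real (p ^ n)"
proof -
  have "(\<Sum>x\<in>cube p n. (indicator A x :: real)) = (\<Sum>x\<in>cube p n. if x \<in> A then 1 else 0)"
    by (intro sum.cong) (auto simp: indicator_def)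
  also have "\<dots> = (\<Sum>x\<in>cube p n \<inter> A. 1)"
    by (rule sum.inter_restrict[OF finite_cube, symmetric])
  also have "cube p n \<inter> A = A" using assms by auto
  finally show ?thesis unfolding expect_def card_cube by simp
qed

theorem theorem5:
  fixes p n :: nat and eps :: real and j :: nat and \<Phi> :: "real \<Rightarrow> real"
  assumes "p \<ge> 2" and "n \<ge> 1"
    and "0 \<le> eps" and "eps \<le> 1 - 1 / real p"
    and "j \<le> p ^ n"
    and "convex_on {0..1} \<Phi>"
  shows "\<exists>f. boolean_fun p n f \<and> monotone_fun p n f
           \<and> expect p n f = real j / real (p ^ n)
           \<and> (\<forall>g. boolean_fun p n g \<and> expect p n g = real j / real (p ^ n) \<longrightarrow>
                 expect p n (\<lambda>x. \<Phi> (noise_op p n eps f x))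
                   \<ge> expect p n (\<lambda>x. \<Phi> (noise_op p n eps g x)))"
proof -
  interpret noise_ctx p n eps using assms by unfold_locales auto
  have p0: "0 < p" using assms by simp
  define m where "m = real j / real (p ^ n)"
  define ind :: "(nat \<Rightarrow> nat) set \<Rightarrow> (nat \<Rightarrow> nat) \<Rightarrow> real" where "ind = indicator"
  define J where "J = (\<lambda>f. expect p n (\<lambda>x. \<Phi> (noise_op p n eps f x)))"
  define fam where "fam = {A. A \<subseteq> cube p n \<and> expect p n (ind A) = m}"
  have exp_ind: "expect p n (ind A) = real (card A) / real (p ^ n)" if "A \<subseteq> cube p n" for A
    unfolding ind_def using exp_indicator[OF that] .
  have finfam: "finite fam" unfolding fam_def
    by (rule finite_subset[of _ "Pow (cube p n)"]) (auto simp: finite_cube)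
  obtain A1 where A1: "A1 \<subseteq> cube p n" "card A1 = j"
    using obtain_subset_with_card_n[of j "cube p n"] assms(5) card_cube by metis
  have A1fam: "A1 \<in> fam" unfolding fam_def m_def using A1 exp_ind by simp
  define M where "M = Max ((\<lambda>A. J (ind A)) ` fam)"
  define fam2 where "fam2 = {A\<in>fam. J (ind A) = M}"
  have Mge: "J (ind A) \<le> M" if "A \<in> fam" for A
    unfolding M_def using finfam that by (intro Max_ge) auto
  have "M \<in> (\<lambda>A. J (ind A)) ` fam" unfolding M_def using finfam A1fam by (intro Max_in) auto
  then have fam2ne: "fam2 \<noteq> {}" unfolding fam2_def by auto
  have finfam2: "finite fam2" unfolding fam2_def using finfam by simp
  define W2 where "W2 = Max ((\<lambda>A. Wf p n (ind A)) ` fam2)"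
  have "W2 \<in> (\<lambda>A. Wf p n (ind A)) ` fam2" unfolding W2_def using finfam2 fam2ne by (intro Max_in) auto
  then obtain A0 where A0: "A0 \<in> fam2" "Wf p n (ind A0) = W2" by auto
  have W2ge: "Wf p n (ind A) \<le> W2" if "A \<in> fam2" for A
    unfolding W2_def using finfam2 that by (intro Max_ge) auto
  have A0fam: "A0 \<in> fam" "J (ind A0) = M" using A0 unfolding fam2_def by auto
  have A0c: "A0 \<subseteq> cube p n" using A0fam unfolding fam_def by auto
  let ?f = "ind A0"
  have bool: "boolean_fun p n ?f" unfolding boolean_fun_def ind_def by (auto simp: indicator_def)
  have mean: "expect p n ?f = m" using A0fam unfolding fam_def by auto
  have opt: "J g \<le> J ?f" if g: "boolean_fun p n g" "expect p n g = m" for g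
  proof -
    define B where "B = {x\<in>cube p n. g x = 1}"
    have eq: "ind B y = g y" if "y \<in> cube p n" for y
      using g(1) that unfolding boolean_fun_def B_def ind_def indicator_def by auto
    have "B \<in> fam" unfolding fam_def using E_cong[where p=p and n=n and f="ind B" and g=g] eq g(2) B_def by auto
    then have "J (ind B) \<le> M" by (rule Mge)
    moreover have "J (ind B) = J g" unfolding J_def using J_cong[where p=p and n=n and f="ind B" and g=g, OF p0] eq by simp
    ultimately show ?thesis using A0fam by simp
  qed
  have mono: "monotone_fun p n ?f"
  proof (rule ccontr)
    assume "\<not> monotone_fun p n ?f"
    then obtain u i t where u: "u \<in> cube p n" "i < n" "u i < t" "t < p" "u \<in> A0" "u(i:=t) \<notin> A0"
      using viol[where p=p and n=n and A=A0] unfolding ind_def by blast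
    interpret comp_ctx p n eps i "u i" t using u by unfold_locales auto
    define g where "g = comp i (u i) t ?f"
    have gb: "g y \<in> {0,1}" if "y \<in> cube p n" for y
      unfolding g_def by (rule comp_P[OF _ that]) (auto simp: ind_def indicator_def)
    define B where "B = {x\<in>cube p n. g x = 1}"
    have eq: "ind B y = g y" if "y \<in> cube p n" for y
      using gb[OF that] that unfolding B_def ind_def indicator_def by auto
    have "expect p n g = expect p n ?f" unfolding expect_def g_def mean_eq ..
    then have "B \<in> fam" unfolding fam_def using E_cong[where p=p and n=n and f="ind B" and g=g] eq mean B_def by auto
    have f01: "?f y \<in> {0..1}" for y by (auto simp: ind_def indicator_def)
    have "J ?f \<le> J g"
      unfolding J_def J_eq[OF p0] g_def
      by (intro divide_right_mono J_mono[OF assms(6)] f01) simp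
    moreover have "J (ind B) = J g" unfolding J_def using J_cong[where p=p and n=n and f="ind B" and g=g, OF p0] eq by simp
    ultimately have "B \<in> fam2" using \<open>B \<in> fam\<close> Mge[of B] A0fam unfolding fam2_def by simp
    then have "Wf p n (ind B) \<le> W2" by (rule W2ge)
    moreover have "Wf p n (ind B) = Wf p n g" using W_cong[where p=p and n=n and f="ind B" and g=g] eq by simp
    moreover have "Wf p n ?f < Wf p n g" unfolding g_def
      by (rule W_less) (use u in \<open>auto simp: ind_def indicator_def\<close>)
    ultimately show False using A0 by simp
  qed
  show ?thesis
    using bool mono mean opt unfolding m_def J_def by blast
qed

end
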